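(* Let $u\colon\mathbb{R}^{n+1}\times[0,\infty)\to\mathbb{R}$ be a graphical solution to mean curvature flow, $\dot u=\sqrt{1+|Du|^2}\,\mathrm{div}\!\left(\frac{Du}{\sqrt{1+|Du|^2}}\right)$, and let $M\ge1$ be such that $|Du(x,t)|\le M$ for all $(x,t)$ with $u(x,t)\le0$. Fix $x_0\in\mathbb{R}^{n+1}$ and $t_1,t_2\ge0$. If $u(x_0,t_1)\le-1$ or $u(x_0,t_2)\le-1$, then $|t_1-t_2|\ge\frac{1}{8(n+1)M^2}$ or \[\frac{|u(x_0,t_1)-u(x_0,t_2)|}{\sqrt{|t_1-t_2|}}\le\sqrt{2(n+1)}\,(M+1).\] *)

theory Defs
  imports "HOL-Analysis.Analysis"
begin

text \<open>Euclidean space R^{n+1} is modelled as real^'n, with n+1 = CARD('n).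
  A time-dependent function is u :: real^'n => real => real, u x t = u(x,t).\<close>

definition grad :: "(real^'n \<Rightarrow> real) \<Rightarrow> real^'n \<Rightarrow> real^'n" where
  "grad f x = (\<chi> i. frechet_derivative f (at x) (axis i 1))"

definition divergence :: "(real^'n \<Rightarrow> real^'n) \<Rightarrow> real^'n \<Rightarrow> real" where
  "divergence F x = (\<Sum>i\<in>UNIV. frechet_derivative F (at x) (axis i 1) $ i)"

definition mcf_graph_solution :: "(real^'n \<Rightarrow> real \<Rightarrow> real) \<Rightarrow> bool" where
  "mcf_graph_solution u \<longleftrightarrow>
     continuous_on (UNIV \<times> {0..}) (\<lambda>(x,t). u x t) \<and>
     (\<forall>x t. t \<ge> 0 \<longrightarrow> (\<lambda>y. u y t) differentiable (at x)) \<and>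
     continuous_on (UNIV \<times> {0..}) (\<lambda>(x,t). grad (\<lambda>y. u y t) x) \<and>
     (\<forall>x t. t > 0 \<longrightarrow> (\<lambda>y. grad (\<lambda>z. u z t) y) differentiable (at x)) \<and>
     (\<forall>x t. t > 0 \<longrightarrow> (\<lambda>s. u x s) differentiable (at t)) \<and>
     (\<forall>x t. t > 0 \<longrightarrow>
        deriv (\<lambda>s. u x s) t =
          sqrt (1 + (norm (grad (\<lambda>y. u y t) x))\<^sup>2) *
          divergence (\<lambda>y. (1 / sqrt (1 + (norm (grad (\<lambda>z. u z t) y))\<^sup>2)) *\<^sub>R grad (\<lambda>z. u z t) y) x)"

end

theory Submission
  imports Defs
begin


lemma crossing:
  fixes h h' :: "real \<Rightarrow> real"
  assumes der: "\<And>r. DERIV h r :> h' r"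
    and h0: "h 0 \<le> 0"
    and cr: "\<And>r. 0 \<le> r \<Longrightarrow> r \<le> L \<Longrightarrow> h r = 0 \<Longrightarrow> h' r < 0"
    and r: "0 \<le> r1" "r1 \<le> L"
  shows "h r1 \<le> 0"
proof (rule ccontr)
  assume pos: "\<not> h r1 \<le> 0"
  have cont: "continuous_on UNIV h"
    using der by (meson DERIV_isCont continuous_at_imp_continuous_on)
  define S where "S = {r. 0 \<le> r \<and> r \<le> r1 \<and> h r \<le> 0}"
  have "closed S" unfolding S_def
    by (intro closed_Collect_conj closed_Collect_le continuous_intros continuous_on_subset[OF cont]) auto
  moreover have "bounded S" unfolding S_def
    by (rule bounded_subset[of "{0..r1}"]) auto
  ultimately have "compact S" by (simp add: compact_eq_bounded_closed)
  moreover have "0 \<in> S" using h0 r unfolding S_def by auto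
  ultimately obtain rs where rs: "rs \<in> S" and rsmax: "\<forall>y\<in>S. y \<le> rs"
    using compact_attains_sup by blast
  have rs1: "rs < r1" using rs pos unfolding S_def by (cases "rs = r1") auto
  have above: "h y > 0" if "rs < y" "y \<le> r1" for y
  proof (rule ccontr)
    assume "\<not> h y > 0"
    hence "y \<in> S" using that rs unfolding S_def by auto
    thus False using rsmax that by force
  qed
  have "h rs = 0"
  proof (rule ccontr)
    assume "h rs \<noteq> 0"
    hence neg: "h rs < 0" using rs unfolding S_def by auto
    have "isCont h rs" using der DERIV_isCont by blast
    hence "eventually (\<lambda>y. h y < 0) (at rs)"
      using order_tendstoD(2) unfolding isCont_def using neg by blast
    then obtain d where d: "d > 0" "\<And>y. y \<noteq> rs \<Longrightarrow> dist y rs < d \<Longrightarrow> h y < 0"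
      unfolding eventually_at by auto
    define y where "y = min (rs + d/2) r1"
    have "rs < y" "y \<le> r1" "dist y rs < d" "y \<noteq> rs" using d rs1 unfolding y_def dist_real_def by auto
    thus False using d(2) above by force
  qed
  hence "h' rs < 0" using cr rs r unfolding S_def by auto
  then obtain d where d: "d > 0" "\<And>e. e > 0 \<Longrightarrow> e < d \<Longrightarrow> h (rs + e) < h rs"
    using DERIV_neg_dec_right[OF der] by blast
  define e where "e = min (d/2) (r1 - rs)"
  have "e > 0" "e < d" "rs + e \<le> r1" using d rs1 unfolding e_def by auto
  thus False using d(2) above \<open>h rs = 0\<close> by force
qed

lemma ray_upper:
  fixes g g' :: "real \<Rightarrow> real"
  assumes der: "\<And>r. DERIV g r :> g' r"
    and g0: "g 0 \<le> y0" and M: "M \<ge> 0" and L: "y0 + M * L < 0"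
    and gb: "\<And>r. 0 \<le> r \<Longrightarrow> r \<le> L \<Longrightarrow> g r \<le> 0 \<Longrightarrow> g' r \<le> M"
    and r: "0 \<le> r" "r \<le> L"
  shows "g r \<le> y0 + M * r"
proof (rule ccontr)
  assume "\<not> g r \<le> y0 + M * r"
  define D where "D = g r - y0 - M * r"
  have D: "D > 0" using \<open>\<not> g r \<le> y0 + M * r\<close> unfolding D_def by simp
  define c where "c = - (y0 + M * L)"
  have c: "c > 0" using L unfolding c_def by simp
  define e where "e = min (D / (r + 1)) (c / (L + 1))"
  have L0: "L \<ge> 0" using r by simp
  have e0: "e > 0" using D c r L0 unfolding e_def by auto
  have "e * r < D"
  proof -
    have "e * r \<le> D / (r+1) * r" using r e0 unfolding e_def by (intro mult_right_mono) auto
    also have "\<dots> < D" using D r by (simp add: field_simps)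
    finally show ?thesis .
  qed
  have eL: "e * L < c"
  proof -
    have "e * L \<le> c / (L+1) * L" using L0 e0 unfolding e_def by (intro mult_right_mono) auto
    also have "\<dots> < c" using c L0 by (simp add: field_simps)
    finally show ?thesis .
  qed
  have "(\<lambda>s. g s - y0 - (M + e) * s) r \<le> 0"
  proof (rule crossing[where h = "\<lambda>s. g s - y0 - (M + e) * s" and h' = "\<lambda>s. g' s - (M + e)" and L = L])
    show "DERIV (\<lambda>s. g s - y0 - (M + e) * s) s :> g' s - (M + e)" for s
      by (auto intro!: derivative_eq_intros der)
    show "g 0 - y0 - (M + e) * 0 \<le> 0" using g0 by simp
    fix s assume s: "0 \<le> s" "s \<le> L" "g s - y0 - (M + e) * s = 0"
    have "(M + e) * s \<le> (M + e) * L" using s M e0 by (intro mult_left_mono) auto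
    hence "g s \<le> 0" using s eL unfolding c_def by (simp add: algebra_simps)
    hence "g' s \<le> M" using gb s by auto
    thus "g' s - (M + e) < 0" using e0 by simp
  qed (use r in auto)
  thus False using \<open>e * r < D\<close> unfolding D_def by (simp add: algebra_simps)
qed

lemma ray_lower:
  fixes g g' :: "real \<Rightarrow> real"
  assumes der: "\<And>r. DERIV g r :> g' r"
    and g0: "g 0 \<ge> y0" and M: "M \<ge> 0" and y0: "y0 \<le> 0"
    and gb: "\<And>r. 0 \<le> r \<Longrightarrow> g r \<le> 0 \<Longrightarrow> g' r \<ge> - M"
    and r: "0 \<le> r"
  shows "g r \<ge> y0 - M * r"
proof (rule ccontr)
  assume "\<not> g r \<ge> y0 - M * r"
  define D where "D = y0 - M * r - g r"
  have D: "D > 0" using \<open>\<not> g r \<ge> y0 - M * r\<close> unfolding D_def by simp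
  define e where "e = D / (r + 1)"
  have e0: "e > 0" using D r unfolding e_def by auto
  have "e * r < D" using D r unfolding e_def by (simp add: field_simps)
  have "(\<lambda>s. y0 - (M + e) * s - g s) r \<le> 0"
  proof (rule crossing[where h = "\<lambda>s. y0 - (M + e) * s - g s" and h' = "\<lambda>s. - (M + e) - g' s" and L = r])
    show "DERIV (\<lambda>s. y0 - (M + e) * s - g s) s :> - (M + e) - g' s" for s
      by (auto intro!: derivative_eq_intros der)
    show "y0 - (M + e) * 0 - g 0 \<le> 0" using g0 by simp
    fix s assume s: "0 \<le> s" "s \<le> r" "y0 - (M + e) * s - g s = 0"
    have "(M + e) * s \<ge> 0" using s M e0 by auto
    hence "g s \<le> 0" using s y0 by (simp add: algebra_simps)
    hence "g' s \<ge> - M" using gb s by auto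
    thus "- (M + e) - g' s < 0" using e0 by simp
  qed (use r in auto)
  thus False using \<open>e * r < D\<close> unfolding D_def by (simp add: algebra_simps)
qed



lemma linear_axis_expand:
  fixes D :: "real^'n \<Rightarrow> 'b::real_vector"
  assumes "linear D"
  shows "D w = (\<Sum>i\<in>UNIV. w $ i *\<^sub>R D (axis i 1))"
proof -
  have "D w = D (\<Sum>i\<in>UNIV. w $ i *\<^sub>R axis i 1)"
    using basis_expansion[of w] by (simp add: scalar_mult_eq_scaleR)
  also have "\<dots> = (\<Sum>i\<in>UNIV. w $ i *\<^sub>R D (axis i 1))"
    using assms by (simp add: linear_sum linear_scale)
  finally show ?thesis .
qed

lemma grad_has_derivative:
  fixes g :: "real^'n \<Rightarrow> real"
  assumes "g differentiable (at y)"
  shows "(g has_derivative (\<lambda>w. grad g y \<bullet> w)) (at y)"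
proof -
  let ?D = "frechet_derivative g (at y)"
  have hd: "(g has_derivative ?D) (at y)" using assms frechet_derivative_works by blast
  have lin: "linear ?D" using has_derivative_linear[OF hd] .
  have "?D w = grad g y \<bullet> w" for w
    unfolding linear_axis_expand[OF lin, of w] grad_def inner_vec_def
    by (simp add: mult.commute)
  hence "?D = (\<lambda>w. grad g y \<bullet> w)" by auto
  thus ?thesis using hd by simp
qed

lemma second_order:
  fixes f f' :: "real \<Rightarrow> real"
  assumes der: "\<And>t. DERIV f t :> f' t"
    and der2: "DERIV f' 0 :> d"
    and del: "\<delta> > 0"
    and mx: "\<And>t. \<bar>t\<bar> < \<delta> \<Longrightarrow> f t \<le> f 0"
  shows "d \<le> 0"
proof (rule ccontr)
  assume "\<not> d \<le> 0"
  hence dpos: "d > 0" by simp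
  have "f' 0 = 0"
    using DERIV_local_max[OF der del] mx by auto
  obtain d' where d': "d' > 0" "\<And>h. h > 0 \<Longrightarrow> h < d' \<Longrightarrow> f' 0 < f' (0 + h)"
    using DERIV_pos_inc_right[OF der2 dpos] by blast
  define h where "h = min d' \<delta> / 2"
  have h: "h > 0" "h < d'" "h < \<delta>" using d' del unfolding h_def by auto
  obtain z where z: "0 < z" "z < h" "f h - f 0 = (h - 0) * f' z"
    using MVT2[OF h(1), of f f'] der by blast
  have "f' z > 0" using d'(2)[of z] z h \<open>f' 0 = 0\<close> by auto
  hence "f h > f 0" using z h by (simp add: algebra_simps)
  thus False using mx[of h] h by auto
qed

lemma left_max:
  fixes f :: "real \<Rightarrow> real"
  assumes der: "DERIV f t :> l"
    and del: "\<delta> > 0"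
    and mx: "\<And>s. t - \<delta> < s \<Longrightarrow> s \<le> t \<Longrightarrow> f s \<le> f t"
  shows "l \<ge> 0"
proof (rule ccontr)
  assume "\<not> l \<ge> 0"
  then obtain d where d: "d > 0" "\<And>h. h > 0 \<Longrightarrow> h < d \<Longrightarrow> f t < f (t - h)"
    using DERIV_neg_dec_left[OF der] by force
  define h where "h = min d \<delta> / 2"
  have "h > 0" "h < d" "h < \<delta>" using d del unfolding h_def by auto
  thus False using d(2)[of h] mx[of "t - h"] by auto
qed



lemma trace_bound:
  fixes D :: "real^'n \<Rightarrow> real^'n" and q :: "real^'n"
  assumes lin: "linear D"
    and Q: "\<And>w. D w \<bullet> w \<le> \<beta> * (w \<bullet> w)"
    and q: "q \<bullet> q \<le> 1"
    and b: "\<beta> \<ge> 0"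
  shows "(\<Sum>i\<in>UNIV. D (axis i 1) $ i) - (\<Sum>k\<in>UNIV. \<Sum>i\<in>UNIV. q$k * q$i * D (axis i 1) $ k)
           \<le> real CARD('n) * \<beta>"
proof -
  define H where "H k l = D (axis l 1) $ k" for k l
  define T where "T = (\<Sum>i\<in>UNIV. H i i)"
  define P where "P = (\<Sum>k\<in>UNIV. \<Sum>l\<in>UNIV. q$k * q$l * H k l)"
  define n2 where "n2 = (\<Sum>k\<in>UNIV. q$k * q$k)"
  have n2: "n2 = q \<bullet> q" unfolding n2_def inner_vec_def by simp
  have diag: "H i i \<le> \<beta>" for i
    using Q[of "axis i 1"] unfolding H_def by (simp add: inner_axis inner_axis_axis)
  have T: "T \<le> real CARD('n) * \<beta>"
  proof -
    have "T \<le> (\<Sum>i\<in>(UNIV::'n set). \<beta>)" unfolding T_def by (rule sum_mono) (use diag in auto)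
    thus ?thesis by simp
  qed
  have pair: "q$k * q$k * H l l - q$k * q$l * H k l - q$l * q$k * H l k + q$l * q$l * H k k
      \<le> \<beta> * (q$k * q$k + q$l * q$l - (if k = l then 2 * q$k * q$l else 0))" for k l
  proof -
    define w where "w = q$k *\<^sub>R axis l 1 - q$l *\<^sub>R axis k (1::real)"
    have Dw: "D w = q$k *\<^sub>R D (axis l 1) - q$l *\<^sub>R D (axis k 1)"
      unfolding w_def using lin by (simp add: linear_diff linear_scale)
    have "D w \<bullet> w = q$k * q$k * H l l - q$k * q$l * H k l - q$l * q$k * H l k + q$l * q$l * H k k"
      unfolding Dw unfolding w_def H_def
      by (simp add: inner_diff_left inner_diff_right inner_axis algebra_simps)
    moreover have "w \<bullet> w = q$k * q$k + q$l * q$l - (if k = l then 2 * q$k * q$l else 0)"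
      unfolding w_def by (auto simp add: inner_diff_left inner_diff_right inner_axis_axis algebra_simps)
    ultimately show ?thesis using Q[of w] by simp
  qed
  have sumpair: "(\<Sum>k\<in>UNIV. \<Sum>l\<in>(UNIV::'n set). q$k * q$k * H l l - q$k * q$l * H k l - q$l * q$k * H l k + q$l * q$l * H k k)
      \<le> (\<Sum>k\<in>UNIV. \<Sum>l\<in>(UNIV::'n set). \<beta> * (q$k * q$k + q$l * q$l - (if k = l then 2 * q$k * q$l else 0)))"
    by (intro sum_mono pair)
  have lhs: "(\<Sum>k\<in>UNIV. \<Sum>l\<in>(UNIV::'n set). q$k * q$k * H l l - q$k * q$l * H k l - q$l * q$k * H l k + q$l * q$l * H k k)
      = 2 * n2 * T - 2 * P"
  proof -
    have a: "(\<Sum>k\<in>UNIV. \<Sum>l\<in>(UNIV::'n set). q$k * q$k * H l l) = n2 * T"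
      unfolding n2_def T_def by (simp add: sum_distrib_left sum_distrib_right) (rule sum.swap)
    have b: "(\<Sum>k\<in>UNIV. \<Sum>l\<in>(UNIV::'n set). q$l * q$l * H k k) = n2 * T"
    proof -
      have "(\<Sum>l\<in>(UNIV::'n set). q$l * q$l * H k k) = n2 * H k k" for k
        unfolding n2_def by (simp add: sum_distrib_right)
      thus ?thesis unfolding T_def by (simp add: sum_distrib_left)
    qed
    have c: "(\<Sum>k\<in>UNIV. \<Sum>l\<in>(UNIV::'n set). q$l * q$k * H l k) = P"
      unfolding P_def by (subst sum.swap) (simp add: mult.commute)
    show ?thesis
      by (simp add: sum.distrib sum_subtractf a b c P_def[symmetric])
  qed
  have rhs: "(\<Sum>k\<in>UNIV. \<Sum>l\<in>(UNIV::'n set). \<beta> * (q$k * q$k + q$l * q$l - (if k = l then 2 * q$k * q$l else 0)))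
      = \<beta> * (2 * real CARD('n) * n2 - 2 * n2)"
  proof -
    have e: "(\<Sum>l\<in>(UNIV::'n set). (if k = l then 2 * q$k * q$l else 0)) = 2 * q$k * q$k" for k
      by (simp add: sum.delta)
    have "(\<Sum>k\<in>UNIV. \<Sum>l\<in>(UNIV::'n set). (q$k * q$k + q$l * q$l - (if k = l then 2 * q$k * q$l else 0)))
        = (\<Sum>k\<in>UNIV. real CARD('n) * (q$k * q$k) + n2 - 2 * q$k * q$k)"
      unfolding n2_def by (simp add: sum.distrib sum_subtractf e)
    also have "\<dots> = real CARD('n) * n2 + real CARD('n) * n2 - 2 * n2"
      unfolding n2_def by (simp add: sum.distrib sum_subtractf sum_distrib_left mult.assoc)
    finally have eq: "(\<Sum>k\<in>UNIV. \<Sum>l\<in>(UNIV::'n set). (q$k * q$k + q$l * q$l - (if k = l then 2 * q$k * q$l else 0)))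
        = real CARD('n) * n2 + real CARD('n) * n2 - 2 * n2" .
    show ?thesis apply (simp only: sum_distrib_left[symmetric] eq) by (simp add: algebra_simps)
  qed
  have key: "2 * n2 * T - 2 * P \<le> \<beta> * (2 * real CARD('n) * n2 - 2 * n2)"
    using sumpair lhs rhs by simp
  have n2le: "n2 \<le> 1" "n2 \<ge> 0" using q n2 by auto
  have "(1 - n2) * T \<le> (1 - n2) * (real CARD('n) * \<beta>)"
    using T n2le by (intro mult_left_mono) auto
  hence "T - P \<le> real CARD('n) * \<beta> - \<beta> * n2" using key by (simp add: algebra_simps)
  also have "\<dots> \<le> real CARD('n) * \<beta>" using b n2le by simp
  finally have "T - P \<le> real CARD('n) * \<beta>" .
  thus ?thesis unfolding T_def P_def H_def .
qed



lemma deriv_inv_sqrt: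
  assumes "r0 > 0"
  shows "DERIV (\<lambda>r. 1 / sqrt r) r0 :> - 1 / (2 * r0 * sqrt r0)"
  using assms
  apply (auto intro!: derivative_eq_intros)
  apply (simp add: field_simps)
  done



lemma touch:
  fixes v :: "real^'n \<Rightarrow> real \<Rightarrow> real" and x0 xs :: "real^'n"
  assumes ts: "ts > 0"
    and dx: "\<And>y. (\<lambda>z. v z ts) differentiable (at y)"
    and dG: "(\<lambda>y. grad (\<lambda>z. v z ts) y) differentiable (at xs)"
    and dt: "(\<lambda>s. v xs s) differentiable (at ts)"
    and pde: "deriv (\<lambda>s. v xs s) ts = sqrt (1 + (norm (grad (\<lambda>y. v y ts) xs))\<^sup>2) *
          divergence (\<lambda>y. (1 / sqrt (1 + (norm (grad (\<lambda>z. v z ts) y))\<^sup>2)) *\<^sub>R grad (\<lambda>z. v z ts) y) xs"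
    and b: "\<beta> \<ge> 0" and K: "K > real CARD('n) * \<beta>"
    and del: "\<delta> > 0"
    and sp: "\<And>y. dist y xs < \<delta> \<Longrightarrow> v y ts \<le> \<alpha> + \<beta> / 2 * (norm (y - x0))\<^sup>2 + K * ts"
    and eq: "v xs ts = \<alpha> + \<beta> / 2 * (norm (xs - x0))\<^sup>2 + K * ts"
    and tm: "\<And>t. ts - \<delta> < t \<Longrightarrow> t \<le> ts \<Longrightarrow> v xs t \<le> \<alpha> + \<beta> / 2 * (norm (xs - x0))\<^sup>2 + K * t"
  shows False
proof -
  define g where "g = (\<lambda>z. v z ts)"
  define G where "G = grad g"
  define D where "D = frechet_derivative G (at xs)"
  define vt where "vt = deriv (\<lambda>s. v xs s) ts"
  have GD: "(G has_derivative D) (at xs)"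
    using dG frechet_derivative_works unfolding D_def G_def g_def by blast
  have linD: "linear D" using has_derivative_linear[OF GD] .
  have Dt: "DERIV (\<lambda>s. v xs s) ts :> vt" unfolding vt_def using dt
    by (simp add: DERIV_deriv_iff_real_differentiable)
  have "vt - K \<ge> 0"
  proof (rule left_max[where f = "\<lambda>s. v xs s - (\<alpha> + \<beta> / 2 * (norm (xs - x0))\<^sup>2 + K * s)" and t = ts and \<delta> = \<delta>])
    show "DERIV (\<lambda>s. v xs s - (\<alpha> + \<beta> / 2 * (norm (xs - x0))\<^sup>2 + K * s)) ts :> vt - K"
      by (auto intro!: derivative_eq_intros Dt)
  qed (use del tm eq in auto)
  hence vtK: "vt \<ge> K" by simp
  have Q: "D w \<bullet> w \<le> \<beta> * (w \<bullet> w)" for w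
  proof -
    define a where "a = xs - x0"
    define f where "f \<tau> = g (xs + \<tau> *\<^sub>R w) - \<beta> / 2 * (a \<bullet> a + 2 * \<tau> * (a \<bullet> w) + \<tau>\<^sup>2 * (w \<bullet> w))" for \<tau>
    define f' where "f' \<tau> = G (xs + \<tau> *\<^sub>R w) \<bullet> w - \<beta> * (a \<bullet> w + \<tau> * (w \<bullet> w))" for \<tau>
    have dline: "((\<lambda>\<tau>::real. xs + \<tau> *\<^sub>R w) has_derivative (\<lambda>h. h *\<^sub>R w)) (at \<tau>)" for \<tau>
      by (auto intro!: derivative_eq_intros)
    have der: "DERIV f \<tau> :> f' \<tau>" for \<tau>
    proof -
      have g1: "((\<lambda>\<tau>. g (xs + \<tau> *\<^sub>R w)) has_derivative (\<lambda>h. G (xs + \<tau> *\<^sub>R w) \<bullet> (h *\<^sub>R w))) (at \<tau>)"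
        using has_derivative_compose[OF dline grad_has_derivative[OF dx[folded g_def]]]
        unfolding G_def by simp
      have e: "(\<lambda>h. G (xs + \<tau> *\<^sub>R w) \<bullet> (h *\<^sub>R w)) = (*) (G (xs + \<tau> *\<^sub>R w) \<bullet> w)"
        by (rule ext) (simp add: mult.commute)
      have g2: "DERIV (\<lambda>\<tau>. g (xs + \<tau> *\<^sub>R w)) \<tau> :> G (xs + \<tau> *\<^sub>R w) \<bullet> w"
        unfolding has_field_derivative_def using g1[unfolded e] .
      show ?thesis unfolding f_def f'_def
        by (auto intro!: derivative_eq_intros g2 simp: algebra_simps)
    qed
    have der2: "DERIV f' 0 :> D w \<bullet> w - \<beta> * (w \<bullet> w)"
    proof -
      have GD': "(G has_derivative D) (at (xs + 0 *\<^sub>R w))" using GD by simp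
      have c1: "((\<lambda>\<tau>. G (xs + \<tau> *\<^sub>R w)) has_derivative (\<lambda>h. D (h *\<^sub>R w))) (at 0)"
        using has_derivative_compose[OF dline GD'] by simp
      have c2: "((\<lambda>\<tau>. G (xs + \<tau> *\<^sub>R w) \<bullet> w) has_derivative (\<lambda>h. D (h *\<^sub>R w) \<bullet> w)) (at 0)"
        using has_derivative_inner_left[OF c1] by simp
      have e: "(\<lambda>h. D (h *\<^sub>R w) \<bullet> w) = (*) (D w \<bullet> w)"
        by (rule ext) (simp add: linear_scale[OF linD] mult.commute)
      have c3: "DERIV (\<lambda>\<tau>. G (xs + \<tau> *\<^sub>R w) \<bullet> w) 0 :> D w \<bullet> w"
        unfolding has_field_derivative_def using c2[unfolded e] .
      show ?thesis unfolding f'_def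
        by (auto intro!: derivative_eq_intros c3 simp: algebra_simps)
    qed
    define d where "d = \<delta> / (norm w + 1)"
    have npos: "norm w + 1 > 0" using norm_ge_zero[of w] by linarith
    have d: "d > 0" using del npos unfolding d_def by simp
    have mx: "f \<tau> \<le> f 0" if "\<bar>\<tau>\<bar> < d" for \<tau>
    proof -
      have "dist (xs + \<tau> *\<^sub>R w) xs = \<bar>\<tau>\<bar> * norm w" by (simp add: dist_norm)
      also have "\<dots> \<le> \<bar>\<tau>\<bar> * (norm w + 1)" by (simp add: mult_left_mono)
      also have "\<dots> < d * (norm w + 1)" using that npos by (intro mult_strict_right_mono) auto
      also have "\<dots> = \<delta>" unfolding d_def using npos by simp
      finally have "v (xs + \<tau> *\<^sub>R w) ts \<le> \<alpha> + \<beta> / 2 * (norm (xs + \<tau> *\<^sub>R w - x0))\<^sup>2 + K * ts"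
        using sp by blast
      moreover have "(norm (xs + \<tau> *\<^sub>R w - x0))\<^sup>2 = a \<bullet> a + 2 * \<tau> * (a \<bullet> w) + \<tau>\<^sup>2 * (w \<bullet> w)"
        unfolding power2_norm_eq_inner a_def
        by (simp add: inner_add_left inner_add_right inner_diff_left inner_diff_right algebra_simps power2_eq_square inner_commute)
      moreover have "(norm (xs - x0))\<^sup>2 = a \<bullet> a" unfolding a_def by (simp add: power2_norm_eq_inner)
      ultimately show ?thesis unfolding f_def g_def using eq by simp
    qed
    have "D w \<bullet> w - \<beta> * (w \<bullet> w) \<le> 0"
      using second_order[OF der der2 d] mx by blast
    thus ?thesis by simp
  qed
  define p where "p = G xs"
  define r0 where "r0 = 1 + (norm p)\<^sup>2"
  define S where "S = sqrt r0"
  define c where "c = - 1 / (2 * r0 * sqrt r0)"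
  have r0: "r0 > 0" unfolding r0_def by (simp add: add_pos_nonneg)
  have S: "S > 0" "S * S = r0" unfolding S_def using r0 by auto
  have n1: "((\<lambda>y. 1 + (norm (G y))\<^sup>2) has_derivative (\<lambda>h. G xs \<bullet> D h + D h \<bullet> G xs)) (at xs)"
  proof -
    have "((\<lambda>y. G y \<bullet> G y + 1) has_derivative (\<lambda>h. G xs \<bullet> D h + D h \<bullet> G xs)) (at xs)"
      by (rule has_derivative_add_const[OF has_derivative_inner[OF GD GD]])
    thus ?thesis by (simp add: power2_norm_eq_inner add.commute)
  qed
  have phi: "((\<lambda>y. 1 / sqrt (1 + (norm (G y))\<^sup>2)) has_derivative (\<lambda>h. (G xs \<bullet> D h + D h \<bullet> G xs) * c)) (at xs)"
    using DERIV_compose_FDERIV[OF deriv_inv_sqrt n1] r0 unfolding c_def r0_def p_def by simp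
  have F: "((\<lambda>y. (1 / sqrt (1 + (norm (G y))\<^sup>2)) *\<^sub>R G y) has_derivative
      (\<lambda>h. (1 / sqrt (1 + (norm (G xs))\<^sup>2)) *\<^sub>R D h + ((G xs \<bullet> D h + D h \<bullet> G xs) * c) *\<^sub>R G xs)) (at xs)"
    using has_derivative_scaleR[OF phi GD] .
  have div: "divergence (\<lambda>y. (1 / sqrt (1 + (norm (G y))\<^sup>2)) *\<^sub>R G y) xs
     = (\<Sum>i\<in>UNIV. (1 / S) * D (axis i 1) $ i + 2 * c * (\<Sum>k\<in>UNIV. p $ k * D (axis i 1) $ k) * p $ i)"
    unfolding divergence_def frechet_derivative_at[OF F, symmetric]
    by (simp add: S_def r0_def p_def inner_vec_def inner_commute algebra_simps)
  have vt_eq: "vt = (\<Sum>i\<in>UNIV. D (axis i 1) $ i) - (\<Sum>k\<in>UNIV. \<Sum>i\<in>UNIV. ((1/S) *\<^sub>R p)$k * ((1/S) *\<^sub>R p)$i * D (axis i 1) $ k)"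
  proof -
    have "vt = S * divergence (\<lambda>y. (1 / sqrt (1 + (norm (G y))\<^sup>2)) *\<^sub>R G y) xs"
      using pde unfolding vt_def S_def r0_def p_def G_def g_def by simp
    also have "\<dots> = (\<Sum>i\<in>UNIV. D (axis i 1) $ i + (2 * c * S) * (\<Sum>k\<in>UNIV. p $ k * D (axis i 1) $ k) * p $ i)"
    proof -
      have x: "S * ((1/S) * X + A) = X + S * A" for X A using S by (simp add: field_simps)
      show ?thesis unfolding div sum_distrib_left[of S]
        by (rule sum.cong[OF refl]) (simp only: x, simp add: algebra_simps)
    qed
    also have "\<dots> = (\<Sum>i\<in>UNIV. D (axis i 1) $ i) - (\<Sum>i\<in>UNIV. \<Sum>k\<in>UNIV. (p $ k * p $ i / r0) * D (axis i 1) $ k)"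
    proof -
      have cs: "2 * c * S = - 1 / r0" unfolding c_def using S by (simp add: S_def field_simps)
      have y: "(2 * c * S) * (\<Sum>k\<in>UNIV. p $ k * D (axis i 1) $ k) * p $ i
           = - (\<Sum>k\<in>UNIV. (p $ k * p $ i / r0) * D (axis i 1) $ k)" for i
        unfolding cs by (simp add: sum_distrib_left sum_distrib_right sum_negf[symmetric] algebra_simps)
      show ?thesis by (simp only: y sum.distrib sum_negf diff_conv_add_uminus)
    qed
    also have "\<dots> = (\<Sum>i\<in>UNIV. D (axis i 1) $ i) - (\<Sum>k\<in>UNIV. \<Sum>i\<in>UNIV. ((1/S) *\<^sub>R p)$k * ((1/S) *\<^sub>R p)$i * D (axis i 1) $ k)"
    proof -
      have qk: "((1/S) *\<^sub>R p)$k * ((1/S) *\<^sub>R p)$i = p $ k * p $ i / r0" for k i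
        using S by (simp add: field_simps)
      show ?thesis by (subst sum.swap) (simp only: qk)
    qed
    finally show ?thesis .
  qed
  have qq: "((1/S) *\<^sub>R p) \<bullet> ((1/S) *\<^sub>R p) \<le> 1"
  proof -
    have "((1/S) *\<^sub>R p) \<bullet> ((1/S) *\<^sub>R p) = (norm p)\<^sup>2 / r0"
      using S by (simp add: power2_norm_eq_inner field_simps)
    also have "\<dots> \<le> 1" using r0 unfolding r0_def by simp
    finally show ?thesis .
  qed
  have "vt \<le> real CARD('n) * \<beta>"
    unfolding vt_eq by (rule trace_bound[OF linD Q qq b])
  thus False using vtK K by simp
qed



definition mcf_pw :: "(real^'n \<Rightarrow> real \<Rightarrow> real) \<Rightarrow> bool" where
  "mcf_pw v \<longleftrightarrow>
     (\<forall>x t. t \<ge> 0 \<longrightarrow> (\<lambda>y. v y t) differentiable (at x)) \<and>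
     (\<forall>x t. t > 0 \<longrightarrow> (\<lambda>y. grad (\<lambda>z. v z t) y) differentiable (at x)) \<and>
     (\<forall>x t. t > 0 \<longrightarrow> (\<lambda>s. v x s) differentiable (at t)) \<and>
     (\<forall>x t. t > 0 \<longrightarrow>
        deriv (\<lambda>s. v x s) t =
          sqrt (1 + (norm (grad (\<lambda>y. v y t) x))\<^sup>2) *
          divergence (\<lambda>y. (1 / sqrt (1 + (norm (grad (\<lambda>z. v z t) y))\<^sup>2)) *\<^sub>R grad (\<lambda>z. v z t) y) x)"

lemma comparison:
  fixes v W :: "real^'n \<Rightarrow> real \<Rightarrow> real" and x0 :: "real^'n"
  assumes cont: "continuous_on (UNIV \<times> {0..}) (\<lambda>(x,t). v x t)"
    and pw: "mcf_pw v"
    and s: "s \<ge> 0" and sT: "s \<le> T"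
    and b: "\<beta> \<ge> 0" and K: "K > real CARD('n) * \<beta>"
    and W: "\<And>x t. W x t = \<alpha> + \<beta> / 2 * (norm (x - x0))\<^sup>2 + K * t"
    and init: "\<And>x. x \<in> cball x0 \<rho> \<Longrightarrow> v x s < W x s"
    and bdry: "\<And>t x. s \<le> t \<Longrightarrow> t \<le> T \<Longrightarrow> (\<forall>y\<in>cball x0 \<rho>. v y t \<le> W y t) \<Longrightarrow> dist x0 x = \<rho> \<Longrightarrow> v x t < W x t"
    and x: "x \<in> cball x0 \<rho>" and t: "s \<le> t" "t \<le> T"
  shows "v x t \<le> W x t"
proof (rule ccontr)
  assume bad: "\<not> v x t \<le> W x t"
  define KK where "KK = cball x0 \<rho> \<times> {s..T}"
  define f where "f = (\<lambda>z. v (fst z) (snd z) - W (fst z) (snd z))"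
  define C where "C = KK \<inter> f -` {0..}"
  have Wc: "continuous_on UNIV (\<lambda>z. W (fst z) (snd z))"
    unfolding W by (intro continuous_intros)
  have vc: "continuous_on KK (\<lambda>z. v (fst z) (snd z))"
  proof -
    have "continuous_on (UNIV \<times> {0..}) (\<lambda>z. v (fst z) (snd z))"
      using cont by (simp add: case_prod_beta)
    thus ?thesis by (rule continuous_on_subset) (use s in \<open>auto simp: KK_def\<close>)
  qed
  have fc: "continuous_on KK f" unfolding f_def
    by (intro continuous_intros vc continuous_on_subset[OF Wc]) auto
  have cKK: "compact KK" unfolding KK_def by (intro compact_Times) auto
  have "closed C" unfolding C_def
    by (rule continuous_closed_preimage[OF fc compact_imp_closed[OF cKK]]) auto
  hence cC: "compact C" using cKK unfolding C_def
    by (metis compact_Int_closed compact_imp_closed inf.absorb_iff2 inf_le1 closed_Int_compact Int_commute)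
  have "(x, t) \<in> C" using bad x t unfolding C_def KK_def f_def by auto
  hence neC: "C \<noteq> {}" by auto
  obtain z where zC: "z \<in> C" and zmin: "\<forall>y\<in>C. snd z \<le> snd y"
    using continuous_attains_inf[OF cC neC continuous_on_snd[OF continuous_on_id]] by auto
  obtain xs ts where z: "z = (xs, ts)" by (cases z)
  have xs: "xs \<in> cball x0 \<rho>" and tsr: "s \<le> ts" "ts \<le> T" and ge: "v xs ts \<ge> W xs ts"
    using zC unfolding z C_def KK_def f_def by auto
  have "ts \<noteq> s" using init[OF xs] ge by auto
  hence tss: "ts > s" using tsr by simp
  have before: "v y t' < W y t'" if "y \<in> cball x0 \<rho>" "s \<le> t'" "t' < ts" for y t'
  proof (rule ccontr)
    assume "\<not> v y t' < W y t'"
    hence "(y, t') \<in> C" using that tsr unfolding C_def KK_def f_def by auto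
    thus False using zmin that unfolding z by force
  qed
  have atts: "v y ts \<le> W y ts" if y: "y \<in> cball x0 \<rho>" for y
  proof (rule ccontr)
    assume "\<not> v y ts \<le> W y ts"
    hence pos: "v y ts - W y ts > 0" by simp
    have "continuous_on {0..} (\<lambda>t'. v y t' - W y t')"
    proof -
      have c1: "continuous_on {0..} (\<lambda>t'. v y t')"
      proof -
        have "continuous_on {0..} ((\<lambda>(x,t). v x t) \<circ> (\<lambda>t'::real. (y,t')))"
          by (rule continuous_on_compose[OF continuous_on_Pair[OF continuous_on_const continuous_on_id]])
             (rule continuous_on_subset[OF cont], auto)
        thus ?thesis by (simp add: o_def)
      qed
      show ?thesis unfolding W by (intro continuous_intros c1)
    qed
    hence "isCont (\<lambda>t'. v y t' - W y t') ts"
      using tss s by (intro continuous_on_interior[of "{0<..}"]) (auto intro: continuous_on_subset simp: interior_open)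
    hence "eventually (\<lambda>t'. v y t' - W y t' > 0) (at ts)"
      using order_tendstoD(1)[OF _ pos] unfolding isCont_def by blast
    then obtain d where d: "d > 0" "\<And>t'. t' \<noteq> ts \<Longrightarrow> dist t' ts < d \<Longrightarrow> v y t' - W y t' > 0"
      unfolding eventually_at by auto
    define t' where "t' = max s (ts - d/2)"
    have "t' \<noteq> ts" "dist t' ts < d" "s \<le> t'" "t' < ts" using d tss unfolding t'_def dist_real_def by auto
    thus False using d(2) before[OF y] by force
  qed
  hence eqv: "v xs ts = W xs ts" using ge xs by (simp add: order_antisym)
  have "dist x0 xs \<noteq> \<rho>" using bdry[OF tsr] atts eqv by force
  hence inn: "dist x0 xs < \<rho>" using xs by simp
  define \<delta> where "\<delta> = min (\<rho> - dist x0 xs) (ts - s)"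
  have del: "\<delta> > 0" using inn tss unfolding \<delta>_def by simp
  have ts0: "ts > 0" using tss s by simp
  show False
  proof (rule touch[of ts v xs \<beta> K \<delta> \<alpha> x0])
    show "0 < ts" by (rule ts0)
    show "\<And>y. (\<lambda>z. v z ts) differentiable (at y)" using pw ts0 unfolding mcf_pw_def by auto
    show "(\<lambda>y. grad (\<lambda>z. v z ts) y) differentiable (at xs)" using pw ts0 unfolding mcf_pw_def by auto
    show "(\<lambda>s. v xs s) differentiable (at ts)" using pw ts0 unfolding mcf_pw_def by auto
    show "deriv (\<lambda>s. v xs s) ts = sqrt (1 + (norm (grad (\<lambda>y. v y ts) xs))\<^sup>2) *
          divergence (\<lambda>y. (1 / sqrt (1 + (norm (grad (\<lambda>z. v z ts) y))\<^sup>2)) *\<^sub>R grad (\<lambda>z. v z ts) y) xs"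
      using pw ts0 unfolding mcf_pw_def by auto
    show "0 \<le> \<beta>" by (rule b)
    show "real CARD('n) * \<beta> < K" by (rule K)
    show "0 < \<delta>" by (rule del)
    show "v y ts \<le> \<alpha> + \<beta> / 2 * (norm (y - x0))\<^sup>2 + K * ts" if "dist y xs < \<delta>" for y
    proof -
      have "dist x0 y \<le> dist x0 xs + dist xs y" by (rule dist_triangle)
      hence "y \<in> cball x0 \<rho>" using that unfolding \<delta>_def by (simp add: dist_commute)
      thus ?thesis using atts W by simp
    qed
    show "v xs ts = \<alpha> + \<beta> / 2 * (norm (xs - x0))\<^sup>2 + K * ts" using eqv W by simp
    show "v xs t' \<le> \<alpha> + \<beta> / 2 * (norm (xs - x0))\<^sup>2 + K * t'" if "ts - \<delta> < t'" "t' \<le> ts" for t'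
    proof (cases "t' = ts")
      case True thus ?thesis using eqv W by simp
    next
      case False
      have "s \<le> t'" using that unfolding \<delta>_def by simp
      thus ?thesis using before[OF xs] False that W by (simp add: less_imp_le)
    qed
  qed
qed



lemma F_differentiable:
  fixes G :: "real^'n \<Rightarrow> real^'n"
  assumes "G differentiable (at x)"
  shows "(\<lambda>y. (1 / sqrt (1 + (norm (G y))\<^sup>2)) *\<^sub>R G y) differentiable (at x)"
proof -
  obtain D where GD: "(G has_derivative D) (at x)" using assms unfolding differentiable_def by blast
  have n1: "((\<lambda>y. 1 + (norm (G y))\<^sup>2) has_derivative (\<lambda>h. G x \<bullet> D h + D h \<bullet> G x)) (at x)"
  proof -
    have "((\<lambda>y. G y \<bullet> G y + 1) has_derivative (\<lambda>h. G x \<bullet> D h + D h \<bullet> G x)) (at x)"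
      by (rule has_derivative_add_const[OF has_derivative_inner[OF GD GD]])
    thus ?thesis by (simp add: power2_norm_eq_inner add.commute)
  qed
  have r0: "1 + (norm (G x))\<^sup>2 > 0" by (simp add: add_pos_nonneg)
  have phi: "((\<lambda>y. 1 / sqrt (1 + (norm (G y))\<^sup>2)) has_derivative
      (\<lambda>h. (G x \<bullet> D h + D h \<bullet> G x) * (- 1 / (2 * (1 + (norm (G x))\<^sup>2) * sqrt (1 + (norm (G x))\<^sup>2))))) (at x)"
    using DERIV_compose_FDERIV[OF deriv_inv_sqrt[OF r0] n1] by simp
  show ?thesis using has_derivative_scaleR[OF phi GD] unfolding differentiable_def by blast
qed

lemma frechet_neg:
  assumes "f differentiable (at x)"
  shows "frechet_derivative (\<lambda>y. - f y) (at x) = (\<lambda>h. - frechet_derivative f (at x) h)"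
  using frechet_derivative_at[OF has_derivative_minus[OF frechet_derivative_works[THEN iffD1, OF assms]]]
  by simp

lemma grad_neg:
  fixes g :: "real^'n \<Rightarrow> real"
  assumes "g differentiable (at x)"
  shows "grad (\<lambda>y. - g y) x = - grad g x"
  unfolding grad_def frechet_neg[OF assms] by (simp add: vec_eq_iff)

lemma div_neg:
  fixes F :: "real^'n \<Rightarrow> real^'n"
  assumes "F differentiable (at x)"
  shows "divergence (\<lambda>y. - F y) x = - divergence F x"
  unfolding divergence_def frechet_neg[OF assms] by (simp add: sum_negf)

lemma mcf_pw_u:
  assumes "mcf_graph_solution u"
  shows "mcf_pw u"
  using assms unfolding mcf_graph_solution_def mcf_pw_def by auto

lemma mcf_pw_neg:
  fixes u :: "real^'n \<Rightarrow> real \<Rightarrow> real"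
  assumes "mcf_graph_solution u"
  shows "mcf_pw (\<lambda>x t. - u x t)"
proof -
  have dx: "\<And>x t. t \<ge> 0 \<Longrightarrow> (\<lambda>y. u y t) differentiable (at x)"
    and dG: "\<And>x t. t > 0 \<Longrightarrow> (\<lambda>y. grad (\<lambda>z. u z t) y) differentiable (at x)"
    and dt: "\<And>x t. t > 0 \<Longrightarrow> (\<lambda>s. u x s) differentiable (at t)"
    and pde: "\<And>x t. t > 0 \<Longrightarrow> deriv (\<lambda>s. u x s) t =
          sqrt (1 + (norm (grad (\<lambda>y. u y t) x))\<^sup>2) *
          divergence (\<lambda>y. (1 / sqrt (1 + (norm (grad (\<lambda>z. u z t) y))\<^sup>2)) *\<^sub>R grad (\<lambda>z. u z t) y) x"
    using assms unfolding mcf_graph_solution_def by auto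
  have gn: "grad (\<lambda>z. - u z t) = (\<lambda>y. - grad (\<lambda>z. u z t) y)" if "t \<ge> 0" for t
    using grad_neg[OF dx[OF that]] by auto
  show ?thesis unfolding mcf_pw_def
  proof (intro conjI allI impI)
    fix x t assume "(t::real) \<ge> 0"
    thus "(\<lambda>y. - u y t) differentiable (at x)" using dx by simp
  next
    fix x t assume t: "(t::real) > 0"
    show "(\<lambda>y. grad (\<lambda>z. - u z t) y) differentiable (at x)"
      unfolding gn[OF less_imp_le[OF t]] using dG[OF t] by simp
  next
    fix x t assume t: "(t::real) > 0"
    show "(\<lambda>s. - u x s) differentiable (at t)" using dt[OF t] by simp
  next
    fix x t assume t: "(t::real) > 0"
    have d1: "deriv (\<lambda>s. - u x s) t = - deriv (\<lambda>s. u x s) t"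
    proof -
      have "DERIV (\<lambda>s. u x s) t :> deriv (\<lambda>s. u x s) t"
        using dt[OF t] by (simp add: DERIV_deriv_iff_real_differentiable)
      hence "DERIV (\<lambda>s. - u x s) t :> - deriv (\<lambda>s. u x s) t" by (rule DERIV_minus)
      thus ?thesis by (rule DERIV_imp_deriv)
    qed
    have Fd: "(\<lambda>y. (1 / sqrt (1 + (norm (grad (\<lambda>z. u z t) y))\<^sup>2)) *\<^sub>R grad (\<lambda>z. u z t) y) differentiable (at x)"
      by (rule F_differentiable[OF dG[OF t]])
    have "(\<lambda>y. (1 / sqrt (1 + (norm (grad (\<lambda>z. - u z t) y))\<^sup>2)) *\<^sub>R grad (\<lambda>z. - u z t) y)
        = (\<lambda>y. - ((1 / sqrt (1 + (norm (grad (\<lambda>z. u z t) y))\<^sup>2)) *\<^sub>R grad (\<lambda>z. u z t) y))"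
      unfolding gn[OF less_imp_le[OF t]] by simp
    thus "deriv (\<lambda>s. - u x s) t =
          sqrt (1 + (norm (grad (\<lambda>y. - u y t) x))\<^sup>2) *
          divergence (\<lambda>y. (1 / sqrt (1 + (norm (grad (\<lambda>z. - u z t) y))\<^sup>2)) *\<^sub>R grad (\<lambda>z. - u z t) y) x"
      using div_neg[OF Fd] d1 pde[OF t] gn[OF less_imp_le[OF t]] by simp
  qed
qed

lemma cont_neg:
  fixes u :: "real^'n \<Rightarrow> real \<Rightarrow> real"
  assumes "continuous_on (UNIV \<times> {0..}) (\<lambda>(x,t). u x t)"
  shows "continuous_on (UNIV \<times> {0..}) (\<lambda>(x,t). - u x t)"
proof -
  have "continuous_on (UNIV \<times> {0..}) (\<lambda>z. - (\<lambda>(x,t). u x t) z)"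
    by (rule continuous_on_minus[OF assms])
  moreover have "(\<lambda>z. - (\<lambda>(x,t). u x t) z) = (\<lambda>(x,t). - u x t)" by (auto simp: fun_eq_iff)
  ultimately show ?thesis by metis
qed

lemma ray_der:
  fixes u :: "real^'n \<Rightarrow> real \<Rightarrow> real"
  assumes dx: "\<And>y. (\<lambda>z. u z t) differentiable (at y)"
  shows "DERIV (\<lambda>r. u (a + r *\<^sub>R d) t) r :> grad (\<lambda>y. u y t) (a + r *\<^sub>R d) \<bullet> d"
proof -
  have dline: "((\<lambda>r::real. a + r *\<^sub>R d) has_derivative (\<lambda>h. h *\<^sub>R d)) (at r)"
    by (auto intro!: derivative_eq_intros)
  have g1: "((\<lambda>r. u (a + r *\<^sub>R d) t) has_derivative (\<lambda>h. grad (\<lambda>y. u y t) (a + r *\<^sub>R d) \<bullet> (h *\<^sub>R d))) (at r)"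
    using has_derivative_compose[OF dline grad_has_derivative[OF dx]] by simp
  have e: "(\<lambda>h. grad (\<lambda>y. u y t) (a + r *\<^sub>R d) \<bullet> (h *\<^sub>R d)) = (*) (grad (\<lambda>y. u y t) (a + r *\<^sub>R d) \<bullet> d)"
    by (rule ext) (simp add: mult.commute)
  show ?thesis unfolding has_field_derivative_def using g1[unfolded e] .
qed

lemma dbound:
  fixes g d :: "real^'n"
  assumes "norm d \<le> 1" "norm g \<le> M"
  shows "\<bar>g \<bullet> d\<bar> \<le> M"
proof -
  have "\<bar>g \<bullet> d\<bar> \<le> norm g * norm d" by (rule Cauchy_Schwarz_ineq2)
  also have "\<dots> \<le> M * norm d" using assms by (intro mult_right_mono) auto
  also have "\<dots> \<le> M * 1"
  proof -
    have "0 \<le> M" using assms(2) norm_ge_zero[of g] by linarith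
    thus ?thesis using assms by (intro mult_left_mono) auto
  qed
  finally show ?thesis by simp
qed



lemma amgm: fixes h M r :: real assumes "h > 0" shows "M * r \<le> h + M\<^sup>2 * r\<^sup>2 / (4 * h)"
proof -
  have "0 \<le> (M * r - 2 * h)\<^sup>2" by simp
  hence "4 * h * (M * r) \<le> 4 * h * (h + M\<^sup>2 * r\<^sup>2 / (4 * h))"
    using assms by (simp add: algebra_simps power2_eq_square)
  thus ?thesis using assms by simp
qed

lemma dir_in:
  fixes x x0 :: "real^'n"
  obtains d where "norm d \<le> 1" "x = x0 + dist x0 x *\<^sub>R d"
proof (cases "x = x0")
  case True thus ?thesis using that[of 0] by simp
next
  case False
  hence n: "norm (x - x0) > 0" by simp
  show ?thesis
    by (rule that[of "(1 / norm (x - x0)) *\<^sub>R (x - x0)"])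
       (use n in \<open>auto simp: dist_norm norm_minus_commute\<close>)
qed

lemma dir_sphere:
  fixes x x0 :: "real^'n"
  assumes "dist x0 x = \<rho>" "\<rho> > 0"
  obtains d where "norm d = 1" "x = x0 + \<rho> *\<^sub>R d"
proof -
  have n: "norm (x - x0) = \<rho>" using assms by (simp add: dist_norm norm_minus_commute)
  show ?thesis
    by (rule that[of "(1 / \<rho>) *\<^sub>R (x - x0)"]) (use n assms in auto)
qed



lemma lower_barrier:
  fixes u :: "real^'n \<Rightarrow> real \<Rightarrow> real" and x0 :: "real^'n"
  assumes sol: "mcf_graph_solution u"
    and GB: "\<forall>x t. t \<ge> 0 \<and> u x t \<le> 0 \<longrightarrow> norm (grad (\<lambda>y. u y t) x) \<le> M"
    and M: "M > 0" and s: "s \<ge> 0" and tau: "\<tau> > 0" and h: "h > 0" and e: "e > 0"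
    and a: "a' \<le> 0" "u x0 s \<ge> a'"
  shows "u x0 (s + \<tau>) \<ge> a' - (h + 2 * e + real CARD('n) * M\<^sup>2 * \<tau> / (2 * h))"
proof -
  define N where "N = real CARD('n)"
  define \<beta> where "\<beta> = M\<^sup>2 / (2 * h)"
  define K where "K = N * \<beta> + e / \<tau>"
  define c where "c = h + e"
  define \<rho> where "\<rho> = (2 * h + e) / M"
  define r0 where "r0 = 2 * h / M"
  define \<alpha> where "\<alpha> = - a' + c - K * s"
  define W where "W x t = \<alpha> + \<beta> / 2 * (norm (x - x0))\<^sup>2 + K * t" for x t
  have dx: "\<And>y t. t \<ge> 0 \<Longrightarrow> (\<lambda>z. u z t) differentiable (at y)"
    using sol unfolding mcf_graph_solution_def by auto
  have b0: "\<beta> \<ge> 0" unfolding \<beta>_def using h by simp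
  have Kb: "K > N * \<beta>" unfolding K_def using e tau by simp
  have K0: "K \<ge> 0" using Kb b0 unfolding N_def by (smt (verit) mult_nonneg_nonneg of_nat_0_le_iff)
  have rho: "\<rho> > 0" "r0 \<ge> 0" "r0 \<le> \<rho>" "\<rho> - r0 = e / M"
    unfolding \<rho>_def r0_def using M h e by (auto simp: field_simps)
  have br0: "\<beta> / 2 * r0\<^sup>2 = h" unfolding \<beta>_def r0_def using M h by (simp add: field_simps power2_eq_square)
  have brho: "\<beta> / 2 * \<rho>\<^sup>2 = h + e + e\<^sup>2 / (4 * h)"
    unfolding \<beta>_def \<rho>_def using M h by (simp add: field_simps power2_eq_square)
  have e2: "e\<^sup>2 / (4 * h) > 0" using e h by simp
  have gbd: "grad (\<lambda>y. u y t) (p + r *\<^sub>R d) \<bullet> d \<ge> - M"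
    if "t \<ge> 0" "norm d \<le> 1" "u (p + r *\<^sub>R d) t \<le> 0" for t p r d
  proof -
    have "norm (grad (\<lambda>y. u y t) (p + r *\<^sub>R d)) \<le> M" using GB that by blast
    thus ?thesis using dbound[OF that(2)] by (smt (verit))
  qed
  have main: "(\<lambda>x t. - u x t) x0 (s + \<tau>) \<le> W x0 (s + \<tau>)"
  proof (rule comparison[where v = "\<lambda>x t. - u x t" and W = W and \<beta> = \<beta> and K = K and \<alpha> = \<alpha> and x0 = x0 and \<rho> = \<rho> and s = s and T = "s + \<tau>"])
    show "continuous_on (UNIV \<times> {0..}) (\<lambda>(x, t). - u x t)"
      using cont_neg sol unfolding mcf_graph_solution_def by blast
    show "mcf_pw (\<lambda>x t. - u x t)" using mcf_pw_neg[OF sol] .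
    show "real CARD('n) * \<beta> < K" using Kb unfolding N_def .
    show "W x t = \<alpha> + \<beta> / 2 * (norm (x - x0))\<^sup>2 + K * t" for x t unfolding W_def ..
  next
    fix x assume x: "x \<in> cball x0 \<rho>"
    obtain d where d: "norm d \<le> 1" "x = x0 + dist x0 x *\<^sub>R d" using dir_in by blast
    have "u (x0 + dist x0 x *\<^sub>R d) s \<ge> a' - M * dist x0 x"
    proof (rule ray_lower[where g = "\<lambda>r. u (x0 + r *\<^sub>R d) s" and g' = "\<lambda>r. grad (\<lambda>y. u y s) (x0 + r *\<^sub>R d) \<bullet> d"])
      show "DERIV (\<lambda>r. u (x0 + r *\<^sub>R d) s) r :> grad (\<lambda>y. u y s) (x0 + r *\<^sub>R d) \<bullet> d" for r
        by (rule ray_der) (use dx s in auto)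
      show "u (x0 + 0 *\<^sub>R d) s \<ge> a'" using a by simp
    qed (use M a s d gbd in auto)
    hence "- u x s \<le> - a' + M * dist x0 x" using d by simp
    also have "\<dots> \<le> - a' + h + M\<^sup>2 * (dist x0 x)\<^sup>2 / (4 * h)" using amgm[OF h] by simp
    also have "\<dots> < W x s"
      unfolding W_def \<alpha>_def c_def \<beta>_def using e h by (simp add: dist_norm norm_minus_commute field_simps)
    finally show "(\<lambda>x t. - u x t) x s < W x s" by simp
  next
    fix t x assume t: "s \<le> t" "t \<le> s + \<tau>" and le: "\<forall>y\<in>cball x0 \<rho>. (\<lambda>x t. - u x t) y t \<le> W y t"
      and xs: "dist x0 x = \<rho>"
    obtain dd where dd: "norm dd = 1" "x = x0 + \<rho> *\<^sub>R dd" using dir_sphere[OF xs rho(1)] by blast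
    define y where "y = x0 + r0 *\<^sub>R dd"
    have ny: "norm (y - x0) = r0" unfolding y_def using dd rho by simp
    hence "y \<in> cball x0 \<rho>" using rho by (simp add: dist_norm norm_minus_commute)
    hence "- u y t \<le> W y t" using le by auto
    moreover have "W y t = \<alpha> + h + K * t" unfolding W_def ny using br0 by simp
    ultimately have uy: "u y t \<ge> a' - c - h - K * (t - s)"
      unfolding \<alpha>_def by (simp add: algebra_simps)
    have y0: "a' - c - h - K * (t - s) \<le> 0" using a K0 t h e unfolding c_def by (smt (verit) mult_nonneg_nonneg)
    have xy: "x = y + (e / M) *\<^sub>R dd" unfolding y_def using dd rho by (simp add: algebra_simps flip: scaleR_add_left)
    have "u (y + (e / M) *\<^sub>R dd) t \<ge> (a' - c - h - K * (t - s)) - M * (e / M)"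
    proof (rule ray_lower[where g = "\<lambda>r. u (y + r *\<^sub>R dd) t" and g' = "\<lambda>r. grad (\<lambda>z. u z t) (y + r *\<^sub>R dd) \<bullet> dd"])
      show "DERIV (\<lambda>r. u (y + r *\<^sub>R dd) t) r :> grad (\<lambda>z. u z t) (y + r *\<^sub>R dd) \<bullet> dd" for r
        by (rule ray_der) (use dx s t in auto)
    qed (use M uy y0 s t dd gbd e in auto)
    hence "- u x t \<le> - a' + c + h + K * (t - s) + e" using xy M by simp
    also have "\<dots> < W x t"
      unfolding W_def \<alpha>_def using dd brho e2 rho(1) by (simp add: algebra_simps)
    finally show "(\<lambda>x t. - u x t) x t < W x t" by simp
  qed (use s tau b0 rho in auto)
  have "W x0 (s + \<tau>) = - a' + h + 2 * e + N * \<beta> * \<tau>"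
    unfolding W_def \<alpha>_def K_def c_def using tau by (simp add: field_simps)
  moreover have "N * \<beta> * \<tau> = real CARD('n) * M\<^sup>2 * \<tau> / (2 * h)" unfolding N_def \<beta>_def by simp
  ultimately show ?thesis using main by simp
qed



lemma upper_barrier:
  fixes u :: "real^'n \<Rightarrow> real \<Rightarrow> real" and x0 :: "real^'n"
  assumes sol: "mcf_graph_solution u"
    and GB: "\<forall>x t. t \<ge> 0 \<and> u x t \<le> 0 \<longrightarrow> norm (grad (\<lambda>y. u y t) x) \<le> M"
    and M: "M > 0" and s: "s \<ge> 0" and tau: "\<tau> > 0" and h: "h > 0" and e: "e > 0"
    and cond: "u x0 s + 2 * h + 3 * e + real CARD('n) * M\<^sup>2 * \<tau> / (2 * h) < 0"
  shows "u x0 (s + \<tau>) \<le> u x0 s + (h + 2 * e + real CARD('n) * M\<^sup>2 * \<tau> / (2 * h))"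
proof -
  define a where "a = u x0 s"
  define N where "N = real CARD('n)"
  define \<beta> where "\<beta> = M\<^sup>2 / (2 * h)"
  define K where "K = N * \<beta> + e / \<tau>"
  define c where "c = h + e"
  define \<rho> where "\<rho> = (2 * h + e) / M"
  define r0 where "r0 = 2 * h / M"
  define \<alpha> where "\<alpha> = a + c - K * s"
  define W where "W x t = \<alpha> + \<beta> / 2 * (norm (x - x0))\<^sup>2 + K * t" for x t
  have dx: "\<And>y t. t \<ge> 0 \<Longrightarrow> (\<lambda>z. u z t) differentiable (at y)"
    using sol unfolding mcf_graph_solution_def by auto
  have b0: "\<beta> \<ge> 0" unfolding \<beta>_def using h by simp
  have Kb: "K > N * \<beta>" unfolding K_def using e tau by simp
  have K0: "K \<ge> 0" using Kb b0 unfolding N_def by (smt (verit) mult_nonneg_nonneg of_nat_0_le_iff)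
  have rho: "\<rho> > 0" "r0 \<ge> 0" "r0 \<le> \<rho>" "\<rho> - r0 = e / M"
    unfolding \<rho>_def r0_def using M h e by (auto simp: field_simps)
  have Mrho: "M * \<rho> = 2 * h + e" unfolding \<rho>_def using M by simp
  have br0: "\<beta> / 2 * r0\<^sup>2 = h" unfolding \<beta>_def r0_def using M h by (simp add: field_simps power2_eq_square)
  have brho: "\<beta> / 2 * \<rho>\<^sup>2 = h + e + e\<^sup>2 / (4 * h)"
    unfolding \<beta>_def \<rho>_def using M h by (simp add: field_simps power2_eq_square)
  have e2: "e\<^sup>2 / (4 * h) > 0" using e h by simp
  have Ktau: "K * \<tau> = N * M\<^sup>2 * \<tau> / (2 * h) + e" unfolding K_def \<beta>_def using tau by (simp add: field_simps)
  have NM0: "N * M\<^sup>2 * \<tau> / (2 * h) \<ge> 0" unfolding N_def using tau h by simp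
  have gbd: "grad (\<lambda>y. u y t) (p + r *\<^sub>R d) \<bullet> d \<le> M"
    if "t \<ge> 0" "norm d \<le> 1" "u (p + r *\<^sub>R d) t \<le> 0" for t p r d
  proof -
    have "norm (grad (\<lambda>y. u y t) (p + r *\<^sub>R d)) \<le> M" using GB that by blast
    thus ?thesis using dbound[OF that(2)] by (smt (verit))
  qed
  have main: "u x0 (s + \<tau>) \<le> W x0 (s + \<tau>)"
  proof (rule comparison[where v = u and W = W and \<beta> = \<beta> and K = K and \<alpha> = \<alpha> and x0 = x0 and \<rho> = \<rho> and s = s and T = "s + \<tau>"])
    show "continuous_on (UNIV \<times> {0..}) (\<lambda>(x, t). u x t)"
      using sol unfolding mcf_graph_solution_def by blast
    show "mcf_pw u" using mcf_pw_u[OF sol] .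
    show "real CARD('n) * \<beta> < K" using Kb unfolding N_def .
    show "W x t = \<alpha> + \<beta> / 2 * (norm (x - x0))\<^sup>2 + K * t" for x t unfolding W_def ..
  next
    fix x assume x: "x \<in> cball x0 \<rho>"
    obtain d where d: "norm d \<le> 1" "x = x0 + dist x0 x *\<^sub>R d" using dir_in by blast
    have "u (x0 + dist x0 x *\<^sub>R d) s \<le> a + M * dist x0 x"
    proof (rule ray_upper[where g = "\<lambda>r. u (x0 + r *\<^sub>R d) s" and g' = "\<lambda>r. grad (\<lambda>y. u y s) (x0 + r *\<^sub>R d) \<bullet> d" and L = \<rho>])
      show "DERIV (\<lambda>r. u (x0 + r *\<^sub>R d) s) r :> grad (\<lambda>y. u y s) (x0 + r *\<^sub>R d) \<bullet> d" for r
        by (rule ray_der) (use dx s in auto)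
      show "u (x0 + 0 *\<^sub>R d) s \<le> a" unfolding a_def by simp
      show "a + M * \<rho> < 0" using Mrho cond NM0 e unfolding a_def N_def by simp
    qed (use M s d gbd x in auto)
    hence "u x s \<le> a + M * dist x0 x" using d by simp
    also have "\<dots> \<le> a + h + M\<^sup>2 * (dist x0 x)\<^sup>2 / (4 * h)" using amgm[OF h] by simp
    also have "\<dots> < W x s"
      unfolding W_def \<alpha>_def c_def \<beta>_def using e h by (simp add: dist_norm norm_minus_commute field_simps)
    finally show "u x s < W x s" .
  next
    fix t x assume t: "s \<le> t" "t \<le> s + \<tau>" and le: "\<forall>y\<in>cball x0 \<rho>. u y t \<le> W y t"
      and xs: "dist x0 x = \<rho>"
    obtain dd where dd: "norm dd = 1" "x = x0 + \<rho> *\<^sub>R dd" using dir_sphere[OF xs rho(1)] by blast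
    define y where "y = x0 + r0 *\<^sub>R dd"
    have ny: "norm (y - x0) = r0" unfolding y_def using dd rho by simp
    hence "y \<in> cball x0 \<rho>" using rho by (simp add: dist_norm norm_minus_commute)
    hence "u y t \<le> W y t" using le by auto
    moreover have "W y t = \<alpha> + h + K * t" unfolding W_def ny using br0 by simp
    ultimately have uy: "u y t \<le> a + c + h + K * (t - s)"
      unfolding \<alpha>_def by (simp add: algebra_simps)
    have "K * (t - s) \<le> K * \<tau>" using K0 t by (intro mult_left_mono) auto
    hence y0: "(a + c + h + K * (t - s)) + M * (e / M) < 0"
      using cond Ktau M unfolding a_def c_def N_def by simp
    have xy: "x = y + (e / M) *\<^sub>R dd" unfolding y_def using dd rho by (simp add: algebra_simps flip: scaleR_add_left)
    have "u (y + (e / M) *\<^sub>R dd) t \<le> (a + c + h + K * (t - s)) + M * (e / M)"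
    proof (rule ray_upper[where g = "\<lambda>r. u (y + r *\<^sub>R dd) t" and g' = "\<lambda>r. grad (\<lambda>z. u z t) (y + r *\<^sub>R dd) \<bullet> dd" and L = "e / M"])
      show "DERIV (\<lambda>r. u (y + r *\<^sub>R dd) t) r :> grad (\<lambda>z. u z t) (y + r *\<^sub>R dd) \<bullet> dd" for r
        by (rule ray_der) (use dx s t in auto)
    qed (use M uy y0 s t dd gbd e in auto)
    hence "u x t \<le> a + c + h + K * (t - s) + e" using xy M by simp
    also have "\<dots> < W x t"
      unfolding W_def \<alpha>_def using dd brho e2 rho(1) by (simp add: algebra_simps)
    finally show "u x t < W x t" .
  qed (use s tau b0 rho in auto)
  have "W x0 (s + \<tau>) = a + c + K * \<tau>"
    unfolding W_def \<alpha>_def by (simp add: algebra_simps)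
  thus ?thesis using main Ktau unfolding a_def c_def N_def by simp
qed



lemma core:
  fixes u :: "real^'n \<Rightarrow> real \<Rightarrow> real" and x0 :: "real^'n"
  assumes sol: "mcf_graph_solution u"
    and M: "M \<ge> 1"
    and GB: "\<forall>x t. t \<ge> 0 \<and> u x t \<le> 0 \<longrightarrow> norm (grad (\<lambda>y. u y t) x) \<le> M"
    and s: "s \<ge> 0" and tau: "\<tau> > 0"
    and small: "8 * real CARD('n) * M\<^sup>2 * \<tau> < 1"
    and neg: "u x0 s \<le> -1 \<or> u x0 (s + \<tau>) \<le> -1"
  shows "\<bar>u x0 s - u x0 (s + \<tau>)\<bar> \<le> sqrt (2 * real CARD('n)) * (M + 1) * sqrt \<tau>"
proof -
  define N where "N = real CARD('n)"
  have N1: "N \<ge> 1" unfolding N_def by simp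
  have M0: "M > 0" using M by simp
  define h where "h = M * sqrt (N * \<tau> / 2)"
  have h0: "h > 0" unfolding h_def using M0 N1 tau by simp
  have h2: "h\<^sup>2 = M\<^sup>2 * N * \<tau> / 2"
    unfolding h_def using N1 tau by (simp add: power_mult_distrib)
  have hq: "N * M\<^sup>2 * \<tau> / (2 * h) = h"
  proof -
    have "N * M\<^sup>2 * \<tau> = 2 * h\<^sup>2" using h2 by (simp add: algebra_simps)
    thus ?thesis using h0 by (simp add: field_simps power2_eq_square)
  qed
  have hsmall: "h < 1/4"
  proof -
    have "h\<^sup>2 < (1/4)\<^sup>2" using h2 small unfolding N_def by (simp add: field_simps power2_eq_square)
    thus ?thesis by (rule power_less_imp_less_base) simp
  qed
  define C where "C = sqrt (2 * N) * (M + 1) * sqrt \<tau>"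
  have st: "sqrt (2 * N) * sqrt \<tau> = 2 * sqrt (N * \<tau> / 2)"
  proof -
    have "(sqrt (2 * N) * sqrt \<tau>)\<^sup>2 = (2 * sqrt (N * \<tau> / 2))\<^sup>2"
      using N1 tau by (simp add: power_mult_distrib)
    thus ?thesis by (subst (asm) power2_eq_iff_nonneg) (use N1 tau in auto)
  qed
  have twoh: "2 * h = M * (sqrt (2 * N) * sqrt \<tau>)" unfolding h_def st by simp
  define e where "e = min (sqrt (2 * N) * sqrt \<tau> / 2) ((1 - 4 * h) / 4)"
  have e0: "e > 0" unfolding e_def using N1 tau hsmall by simp
  define B where "B = h + 2 * e + real CARD('n) * M\<^sup>2 * \<tau> / (2 * h)"
  have B: "B = 2 * h + 2 * e" unfolding B_def using hq unfolding N_def by simp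
  have BC: "B \<le> C"
  proof -
    have "e \<le> sqrt (2 * N) * sqrt \<tau> / 2" unfolding e_def by (rule min.cobounded1)
    hence "2 * e \<le> sqrt (2 * N) * sqrt \<tau>" by simp
    thus ?thesis unfolding B C_def twoh by (simp add: algebra_simps)
  qed
  have C1: "C < 1"
  proof -
    have "(M + 1)\<^sup>2 \<le> (2 * M)\<^sup>2" using M by (intro power_mono) auto
    hence "2 * N * (M + 1)\<^sup>2 * \<tau> \<le> 2 * N * (2 * M)\<^sup>2 * \<tau>" using N1 tau by (intro mult_right_mono mult_left_mono) auto
    also have "\<dots> = 8 * N * M\<^sup>2 * \<tau>" by (simp add: power2_eq_square)
    also have "\<dots> < 1" using small unfolding N_def .
    finally have "C\<^sup>2 < 1\<^sup>2" unfolding C_def using N1 tau by (simp add: power_mult_distrib)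
    moreover have "C \<ge> 0" unfolding C_def using N1 M tau by simp
    ultimately show ?thesis using power_less_imp_less_base[of C 2 1] by simp
  qed
  have "e \<le> (1 - 4 * h) / 4" unfolding e_def by (rule min.cobounded2)
  hence e3: "3 * h + 3 * e \<le> 3 / 4" by simp
  have U: "u x0 (s + \<tau>) \<le> u x0 s + B" if "u x0 s \<le> -1"
    unfolding B_def
  proof (rule upper_barrier[OF sol GB M0 s tau h0 e0])
    show "u x0 s + 2 * h + 3 * e + real CARD('n) * M\<^sup>2 * \<tau> / (2 * h) < 0"
      using that e3 hq unfolding N_def by simp
  qed
  have L: "u x0 (s + \<tau>) \<ge> a' - B" if "a' \<le> 0" "u x0 s \<ge> a'" for a'
    unfolding B_def by (rule lower_barrier[OF sol GB M0 s tau h0 e0 that])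
  have "\<bar>u x0 s - u x0 (s + \<tau>)\<bar> \<le> B"
  proof (cases "u x0 s \<le> -1")
    case True
    thus ?thesis using U[OF True] L[of "u x0 s"] by simp
  next
    case False
    hence aT: "u x0 (s + \<tau>) \<le> -1" using neg by simp
    show ?thesis
    proof (cases "u x0 s \<le> 0")
      case True
      thus ?thesis using L[of "u x0 s"] aT False by simp
    next
      case False
      hence "u x0 (s + \<tau>) \<ge> 0 - B" using L[of 0] by simp
      thus ?thesis using aT BC C1 by simp
    qed
  qed
  thus ?thesis using BC unfolding C_def N_def by simp
qed



theorem lemma6p1:
  fixes u :: "real^'n \<Rightarrow> real \<Rightarrow> real" and M t1 t2 :: real and x0 :: "real^'n"
  assumes "mcf_graph_solution u"
    and "M \<ge> 1"
    and "\<forall>x t. t \<ge> 0 \<and> u x t \<le> 0 \<longrightarrow> norm (grad (\<lambda>y. u y t) x) \<le> M"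
    and "t1 \<ge> 0" and "t2 \<ge> 0"
    and "u x0 t1 \<le> -1 \<or> u x0 t2 \<le> -1"
  shows "\<bar>t1 - t2\<bar> \<ge> 1 / (8 * real CARD('n) * M\<^sup>2) \<or>
         \<bar>u x0 t1 - u x0 t2\<bar> / sqrt \<bar>t1 - t2\<bar> \<le> sqrt (2 * real CARD('n)) * (M + 1)"
proof (cases "t1 = t2")
  case True thus ?thesis using assms(2) by simp
next
  case False
  show ?thesis
  proof (subst disj_commute, rule disjCI)
    assume "\<not> \<bar>t1 - t2\<bar> \<ge> 1 / (8 * real CARD('n) * M\<^sup>2)"
    hence "\<bar>t1 - t2\<bar> < 1 / (8 * real CARD('n) * M\<^sup>2)" by simp
    moreover have pos: "8 * real CARD('n) * M\<^sup>2 > 0" using assms(2) by simp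
    ultimately have sm: "8 * real CARD('n) * M\<^sup>2 * \<bar>t1 - t2\<bar> < 1"
      by (simp add: field_simps)
    define C where "C = sqrt (2 * real CARD('n)) * (M + 1)"
    have key: "\<bar>u x0 t1 - u x0 t2\<bar> \<le> C * sqrt \<bar>t1 - t2\<bar>"
    proof (cases "t1 < t2")
      case True
      have "\<bar>u x0 t1 - u x0 (t1 + (t2 - t1))\<bar> \<le> C * sqrt (t2 - t1)"
        unfolding C_def
        by (rule core[OF assms(1,2,3)]) (use True assms(4,6) sm in auto)
      thus ?thesis using True by simp
    next
      case f: False
      hence lt: "t2 < t1" using False by simp
      have "\<bar>u x0 t2 - u x0 (t2 + (t1 - t2))\<bar> \<le> C * sqrt (t1 - t2)"
        unfolding C_def
        by (rule core[OF assms(1,2,3)]) (use lt assms(5,6) sm in auto)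
      thus ?thesis using lt by (simp add: abs_minus_commute)
    qed
    have "sqrt \<bar>t1 - t2\<bar> > 0" using False by simp
    thus "\<bar>u x0 t1 - u x0 t2\<bar> / sqrt \<bar>t1 - t2\<bar> \<le> sqrt (2 * real CARD('n)) * (M + 1)"
      using key unfolding C_def by (simp add: pos_divide_le_eq)
  qed
qed

end
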